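(* Let $\mathbb{M}$ be $d$-dimensional Minkowski spacetime ($d\ge 2$) with points written $(t,\vec x)$, $t\in\mathbb{R}$, $\vec x\in\mathbb{R}^{d-1}$. Let $\mathcal{H}$ be a Hilbert space, let $U$ be a unitary representation of the additive group $\mathbb{R}^{d-1}$ on $\mathcal{H}$, and let $\hat\psi:\mathbb{M}\to\mathcal{B}(\mathcal{H})$ and $\hat\pi:\mathbb{M}\to\mathcal{B}(\mathcal{H})$ be such that (1) $U$ is weakly continuous; (2) $U(\vec y)\hat\pi(t,\vec x)U(\vec y)^\dagger=\hat\pi(t,\vec x+\vec y)$ for all $\vec x,\vec y\in\mathbb{R}^{d-1}$ and all $t\in\mathbb{R}$. Then for every $t\in\mathbb{R}$: $[\hat\psi(t,\vec x),\hat\pi(t,\vec y)]=0$ for all $\vec x\neq\vec y\in\mathbb{R}^{d-1}$ if and only if $[\hat\psi(t,\vec x),\hat\pi(t,\vec y)]=0$ for all $\vec x,\vec y\in\mathbb{R}^{d-1}$; and $\{\hat\psi(t,\vec x),\hat\pi(t,\vec y)\}=0$ for all $\vec x\neq\vec y\in\mathbb{R}^{d-1}$ if and only if $\{\hat\psi(t,\vec x),\hat\pi(t,\vec y)\}=0$ for all $\vec x,\vec y\in\mathbb{R}^{d-1}$.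
   Context: $\mathcal{B}(\mathcal{H})$ denotes the bounded operators on $\mathcal{H}$. $[A,B]=AB-BA$, $\{A,B\}=AB+BA$. *)

theory Defs
  imports "HOL-Analysis.Analysis"
begin

text \<open>A complex Hilbert space is encoded as a real Hilbert space 'h (real part of the
complex inner product) together with a compatible complex structure J (multiplication by i).
The complex inner product is recovered as inner x y + i * inner (J x) y (up to convention).\<close>

definition complex_structure :: "('h::real_inner \<Rightarrow> 'h) \<Rightarrow> bool" where
  "complex_structure J \<longleftrightarrow> linear J \<and> (\<forall>x. J (J x) = - x) \<and>
     (\<forall>x y. inner (J x) (J y) = inner x y)"

definition bounded_op :: "('h::real_inner \<Rightarrow> 'h) \<Rightarrow> ('h \<Rightarrow> 'h) \<Rightarrow> bool" where
  "bounded_op J A \<longleftrightarrow> bounded_linear A \<and> (\<forall>x. A (J x) = J (A x))"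

definition adjoint_op :: "('h::real_inner \<Rightarrow> 'h) \<Rightarrow> ('h \<Rightarrow> 'h)" where
  "adjoint_op A = (THE B. \<forall>x y. inner (A x) y = inner x (B y))"

definition unitary_op :: "('h::real_inner \<Rightarrow> 'h) \<Rightarrow> ('h \<Rightarrow> 'h) \<Rightarrow> bool" where
  "unitary_op J V \<longleftrightarrow> bounded_op J V \<and> (\<forall>x y. inner (V x) (V y) = inner x y) \<and> surj V"

definition unitary_rep :: "('h::real_inner \<Rightarrow> 'h) \<Rightarrow> ('v::ab_group_add \<Rightarrow> 'h \<Rightarrow> 'h) \<Rightarrow> bool" where
  "unitary_rep J U \<longleftrightarrow> U 0 = id \<and> (\<forall>x y. U (x + y) = U x \<circ> U y) \<and> (\<forall>x. unitary_op J (U x))"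

text \<open>Weak continuity: all matrix elements are continuous (real and imaginary parts are
covered since phi ranges over all vectors, including J phi).\<close>
definition weakly_continuous :: "('v::topological_space \<Rightarrow> 'h::real_inner \<Rightarrow> 'h) \<Rightarrow> bool" where
  "weakly_continuous U \<longleftrightarrow> (\<forall>\<phi> \<psi>. continuous_on UNIV (\<lambda>y. inner \<phi> (U y \<psi>)))"

definition commutator :: "('h::ab_group_add \<Rightarrow> 'h) \<Rightarrow> ('h \<Rightarrow> 'h) \<Rightarrow> ('h \<Rightarrow> 'h)" where
  "commutator A B = (\<lambda>v. A (B v) - B (A v))"

definition anticommutator :: "('h::ab_group_add \<Rightarrow> 'h) \<Rightarrow> ('h \<Rightarrow> 'h) \<Rightarrow> ('h \<Rightarrow> 'h)" where
  "anticommutator A B = (\<lambda>v. A (B v) + B (A v))"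

end

theory Submission imports Defs begin

lemma zero_ext:
  fixes F :: "'a::{perfect_space,metric_space} \<Rightarrow> 'b::real_normed_vector"
  assumes "isCont F x" "\<forall>y. y \<noteq> x \<longrightarrow> F y = 0"
  shows "F x = 0"
proof -
  have 1: "(F \<longlongrightarrow> F x) (at x)" using assms(1) isCont_def by blast
  have "\<forall>\<^sub>F y in at x. F y = 0" using assms(2) by (simp add: eventually_at_filter)
  hence 2: "(F \<longlongrightarrow> 0) (at x)" by (rule tendsto_eventually)
  show ?thesis using tendsto_unique[OF at_neq_bot 1 2] .
qed

lemma U_facts:
  assumes "unitary_rep J U"
  shows "U 0 = id" "\<And>x y. U (x + y) = U x \<circ> U y" "\<And>x. bounded_linear (U x)"
    "\<And>x a b. inner (U x a) (U x b) = inner a b"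
  using assms unfolding unitary_rep_def unitary_op_def bounded_op_def by auto

lemma U_inv:
  fixes U :: "'v::ab_group_add \<Rightarrow> 'h::real_inner \<Rightarrow> 'h"
  assumes "unitary_rep J U" shows "U y (U (-y) z) = z"
proof -
  have "U (y + -y) = U y \<circ> U (-y)" using U_facts(2)[OF assms] .
  thus ?thesis using U_facts(1)[OF assms] by (metis comp_apply id_apply add.right_inverse)
qed

lemma adj_U:
  fixes U :: "'v::ab_group_add \<Rightarrow> 'h::real_inner \<Rightarrow> 'h"
  assumes "unitary_rep J U" shows "adjoint_op (U y) = U (-y)"
proof -
  have A: "\<forall>x z. inner (U y x) z = inner x (U (-y) z)"
  proof (intro allI)
    fix x z
    have "inner (U y x) z = inner (U y x) (U y (U (-y) z))" using U_inv[OF assms] by simp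
    also have "\<dots> = inner x (U (-y) z)" using U_facts(4)[OF assms] by simp
    finally show "inner (U y x) z = inner x (U (-y) z)" .
  qed
  show ?thesis unfolding adjoint_op_def
  proof (rule the_equality)
  show "\<forall>x z. inner (U y x) z = inner x (U (-y) z)" by (rule A)
  fix B assume B: "\<forall>x z. inner (U y x) z = inner x (B z)"
  show "B = U (-y)"
  proof
    fix z
    have "\<forall>x. inner x (B z - U (-y) z) = 0"
      using B A by (simp add: inner_diff_right)
    thus "B z = U (-y) z" by (metis inner_eq_zero_iff eq_iff_diff_eq_0)
  qed
  qed
qed

lemma strong_cont:
  fixes U :: "'v::real_normed_vector \<Rightarrow> 'h::real_inner \<Rightarrow> 'h"
  assumes "unitary_rep J U" "weakly_continuous U"
  shows "isCont (\<lambda>y. U y w) y0"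
proof -
  let ?l = "U y0 w"
  have c: "isCont (\<lambda>y. inner ?l (U y w)) y0"
    using assms(2) unfolding weakly_continuous_def by (simp add: continuous_on_eq_continuous_at)
  have eq: "norm (U y w - ?l) = sqrt (2 * inner w w - 2 * inner ?l (U y w))" for y
  proof -
    have "(norm (U y w - ?l))^2 = inner (U y w) (U y w) - 2 * inner ?l (U y w) + inner ?l ?l"
      by (simp add: power2_norm_eq_inner inner_diff_left inner_diff_right inner_commute)
    also have "\<dots> = 2 * inner w w - 2 * inner ?l (U y w)" using U_facts(4)[OF assms(1)] by simp
    finally show ?thesis by (metis norm_ge_zero real_sqrt_unique)
  qed
  have "((\<lambda>y. sqrt (2 * inner w w - 2 * inner ?l (U y w))) \<longlongrightarrow> sqrt (2 * inner w w - 2 * inner ?l ?l)) (at y0)"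
    using tendsto_real_sqrt[OF tendsto_diff[OF tendsto_const tendsto_mult[OF tendsto_const c[unfolded isCont_def]]]] .
  moreover have "inner ?l ?l = inner w w" using U_facts(4)[OF assms(1)] by simp
  ultimately have "((\<lambda>y. norm (U y w - ?l)) \<longlongrightarrow> 0) (at y0)" unfolding eq by simp
  hence "((\<lambda>y. U y w - ?l) \<longlongrightarrow> 0) (at y0)" by (rule tendsto_norm_zero_cancel)
  thus ?thesis unfolding isCont_def by (rule LIM_zero_cancel)
qed

lemma pi_cont:
  fixes U :: "'v::real_normed_vector \<Rightarrow> 'h::real_inner \<Rightarrow> 'h"
  assumes "unitary_rep J U" "weakly_continuous U" "bounded_linear A"
  shows "isCont (\<lambda>y. U y (A (U (-y) v))) y0"
proof -
  define g where "g y = A (U (-y) v)" for y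
  have m: "isCont (\<lambda>y::'v. -y) y0" by (intro continuous_intros)
  have c1: "isCont (\<lambda>y. U (-y) v) y0"
    using isCont_o2[OF m strong_cont[OF assms(1,2)]] by simp
  have gc: "isCont g y0" unfolding g_def
    using isCont_o2[OF c1 linear_continuous_at[OF assms(3)]] by simp
  have e: "U y (g y) = U y (g y - g y0) + U y (g y0)" for y
    by (simp add: linear_diff[OF bounded_linear.linear[OF U_facts(3)[OF assms(1)]]])
  have n: "norm (U y z) = norm z" for y z
    unfolding norm_eq_sqrt_inner using U_facts(4)[OF assms(1)] by metis
  have "((\<lambda>y. g y - g y0) \<longlongrightarrow> 0) (at y0)"
    using gc unfolding isCont_def by (rule LIM_zero)
  hence "((\<lambda>y. norm (g y - g y0)) \<longlongrightarrow> 0) (at y0)" by (rule tendsto_norm_zero)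
  hence "((\<lambda>y. norm (U y (g y - g y0))) \<longlongrightarrow> 0) (at y0)" unfolding n .
  hence "((\<lambda>y. U y (g y - g y0)) \<longlongrightarrow> 0) (at y0)" by (rule tendsto_norm_zero_cancel)
  moreover have "((\<lambda>y. U y (g y0)) \<longlongrightarrow> U y0 (g y0)) (at y0)"
    using strong_cont[OF assms(1,2)] isCont_def by blast
  ultimately have "((\<lambda>y. U y (g y - g y0) + U y (g y0)) \<longlongrightarrow> 0 + U y0 (g y0)) (at y0)"
    by (rule tendsto_add)
  hence "((\<lambda>y. U y (g y)) \<longlongrightarrow> U y0 (g y0)) (at y0)" unfolding e[symmetric] by simp
  thus ?thesis unfolding isCont_def g_def .
qed

theorem corollary1:
  fixes J :: "'h::{real_inner, complete_space} \<Rightarrow> 'h"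
    and U :: "real^'n \<Rightarrow> 'h \<Rightarrow> 'h"
    and psi pi :: "real \<Rightarrow> real^'n \<Rightarrow> 'h \<Rightarrow> 'h"
  assumes "complex_structure J"
    and "unitary_rep J U"
    and "\<forall>t x. bounded_op J (psi t x)"
    and "\<forall>t x. bounded_op J (pi t x)"
    and "weakly_continuous U"
    and "\<forall>t x y. U y \<circ> pi t x \<circ> adjoint_op (U y) = pi t (x + y)"
  shows "\<forall>t.
    ((\<forall>x y. x \<noteq> y \<longrightarrow> commutator (psi t x) (pi t y) = (\<lambda>v. 0))
       \<longleftrightarrow> (\<forall>x y. commutator (psi t x) (pi t y) = (\<lambda>v. 0)))
  \<and> ((\<forall>x y. x \<noteq> y \<longrightarrow> anticommutator (psi t x) (pi t y) = (\<lambda>v. 0))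
       \<longleftrightarrow> (\<forall>x y. anticommutator (psi t x) (pi t y) = (\<lambda>v. 0)))"
proof -
  have pieq: "pi t y = (\<lambda>w. U y (pi t 0 (U (-y) w)))" for t y
  proof -
    have "U y \<circ> pi t 0 \<circ> adjoint_op (U y) = pi t (0 + y)" using assms(6) by blast
    thus ?thesis using adj_U[OF assms(2)] by (auto simp: o_def)
  qed
  have pc: "isCont (\<lambda>y. pi t y w) y0" for t w y0
  proof -
    have "bounded_linear (pi t 0)" using assms(4) bounded_op_def by blast
    from pi_cont[OF assms(2,5) this] show ?thesis by (subst pieq) simp
  qed
  have psl: "bounded_linear (psi t x)" for t x using assms(3) bounded_op_def by blast
  have pc2: "isCont (\<lambda>y. psi t x (pi t y w)) y0" for t x w y0
    using isCont_o2[OF pc linear_continuous_at[OF psl]] by simp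
  have cc: "isCont (\<lambda>y. commutator (psi t x) (pi t y) v) y0" for t x v y0
    unfolding commutator_def by (rule isCont_diff[OF pc2 pc])
  have ac: "isCont (\<lambda>y. anticommutator (psi t x) (pi t y) v) y0" for t x v y0
    unfolding anticommutator_def by (rule isCont_add[OF pc2 pc])
  have C1: "\<forall>x y. commutator (psi t x) (pi t y) = (\<lambda>v. 0)"
    if H: "\<forall>x y. x \<noteq> y \<longrightarrow> commutator (psi t x) (pi t y) = (\<lambda>v. 0)" for t
  proof -
    show ?thesis
    proof (intro allI ext)
      fix x y v
      show "commutator (psi t x) (pi t y) v = 0"
      proof (cases "x = y")
        case True
        have "(\<lambda>y. commutator (psi t x) (pi t y) v) x = 0"
        proof (rule zero_ext[OF cc], intro allI impI)
          fix y' assume "y' \<noteq> x"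
          hence "x \<noteq> y'" by simp
          thus "commutator (psi t x) (pi t y') v = 0" using H by simp
        qed
        thus ?thesis using True by simp
      next
        case False thus ?thesis using H by simp
      qed
    qed
  qed
  have C2: "\<forall>x y. anticommutator (psi t x) (pi t y) = (\<lambda>v. 0)"
    if H: "\<forall>x y. x \<noteq> y \<longrightarrow> anticommutator (psi t x) (pi t y) = (\<lambda>v. 0)" for t
  proof -
    show ?thesis
    proof (intro allI ext)
      fix x y v
      show "anticommutator (psi t x) (pi t y) v = 0"
      proof (cases "x = y")
        case True
        have "(\<lambda>y. anticommutator (psi t x) (pi t y) v) x = 0"
        proof (rule zero_ext[OF ac], intro allI impI)
          fix y' assume "y' \<noteq> x"
          hence "x \<noteq> y'" by simp
          thus "anticommutator (psi t x) (pi t y') v = 0" using H by simp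
        qed
        thus ?thesis using True by simp
      next
        case False thus ?thesis using H by simp
      qed
    qed
  qed
  show ?thesis
  proof (rule allI, rule conjI)
    fix t
    show "(\<forall>x y. x \<noteq> y \<longrightarrow> commutator (psi t x) (pi t y) = (\<lambda>v. 0))
       \<longleftrightarrow> (\<forall>x y. commutator (psi t x) (pi t y) = (\<lambda>v. 0))"
      using C1[of t] by blast
    show "(\<forall>x y. x \<noteq> y \<longrightarrow> anticommutator (psi t x) (pi t y) = (\<lambda>v. 0))
       \<longleftrightarrow> (\<forall>x y. anticommutator (psi t x) (pi t y) = (\<lambda>v. 0))"
      using C2[of t] by blast
  qed
qed

end
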